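(* Let $X_1,X_2$ be independent random variables on $S^1$, each centered at $P=(1,0)$. Then $$V(X_1+X_2)=V(X_1)+V(X_2)-\frac{V(X_1)V(X_2)}{2}.$$
   Context: A random variable $X$ on $S^1=\{x\in\mathbb{R}^2:\|x\|=1\}$ is given by a density of its angle $\Theta\in[-\pi,\pi)$, with $X=(\cos\Theta,\sin\Theta)$. $X$ is centered at $P=(1,0)$ if its mean value lies in the direction of $P$, i.e. $E[\sin\Theta]=0$. The variance is $V(X)=E[\|X-P\|^2]=E[2-2\cos\Theta]$. For independent $X_1,X_2$ with angles $\Theta_1,\Theta_2$, the sum $X_1+X_2$ is the point with angle $\Theta_1+\Theta_2$ (mod $2\pi$), i.e. its angle has density $f(\theta)=\int_{-\pi}^{\pi}f_1(\theta')f_2(\theta-\theta')\,d\theta'$. *)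

theory Defs
  imports "HOL-Analysis.Analysis"
begin

text \<open>A random point on the circle is given by a probability density of its angle
  on [-pi, pi).\<close>
definition circ_density :: "(real \<Rightarrow> real) \<Rightarrow> bool" where
  "circ_density f \<longleftrightarrow>
     (\<forall>\<theta>\<in>{-pi..<pi}. 0 \<le> f \<theta>) \<and>
     set_integrable lborel {-pi..<pi} f \<and>
     (LINT \<theta>:{-pi..<pi}|lborel. f \<theta>) = 1"

definition angle_wrap :: "real \<Rightarrow> real" where
  "angle_wrap x = x - 2 * pi * of_int \<lfloor>(x + pi) / (2 * pi)\<rfloor>"

text \<open>Density of the angle of the sum X1 + X2 of independent X1, X2 (angles added mod 2 pi).\<close>
definition circ_conv :: "(real \<Rightarrow> real) \<Rightarrow> (real \<Rightarrow> real) \<Rightarrow> real \<Rightarrow> real" where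
  "circ_conv f1 f2 \<theta> = (LINT \<theta>':{-pi..<pi}|lborel. f1 \<theta>' * f2 (angle_wrap (\<theta> - \<theta>')))"

definition circ_centered :: "(real \<Rightarrow> real) \<Rightarrow> bool" where
  "circ_centered f \<longleftrightarrow> (LINT \<theta>:{-pi..<pi}|lborel. sin \<theta> * f \<theta>) = 0"

text \<open>Variance V(X) = E[||X - P||^2] = E[2 - 2 cos Theta].\<close>
definition circ_var :: "(real \<Rightarrow> real) \<Rightarrow> real" where
  "circ_var f = (LINT \<theta>:{-pi..<pi}|lborel. (2 - 2 * cos \<theta>) * f \<theta>)"

end

theory Submission
  imports Defs
begin

lemma shift_set_integral:
  fixes g :: "real \<Rightarrow> real" and c d t :: real
  assumes g: "set_integrable lborel {c..<d} g"
  shows "set_integrable lborel {c-t..<d-t} (\<lambda>x. g (x + t))"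
    and "(LINT x:{c-t..<d-t}|lborel. g (x + t)) = (LINT x:{c..<d}|lborel. g x)"
proof -
  let ?h = "\<lambda>x. indicator {c..<d} x *\<^sub>R g x"
  have eq: "(\<lambda>x. indicator {c-t..<d-t} x *\<^sub>R g (x + t)) = (\<lambda>x. ?h (t + 1 * x))"
    by (rule ext) (auto simp: indicator_def algebra_simps)
  have hi: "integrable lborel ?h" using g by (simp add: set_integrable_def)
  show "set_integrable lborel {c-t..<d-t} (\<lambda>x. g (x + t))"
    unfolding set_integrable_def eq
    using lborel_integrable_real_affine_iff[of 1 ?h t] hi by simp
  show "(LINT x:{c-t..<d-t}|lborel. g (x + t)) = (LINT x:{c..<d}|lborel. g x)"
    unfolding set_lebesgue_integral_def eq
    using lborel_integral_real_affine[of 1 ?h t] by simp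
qed

lemma wrap_periodic: "angle_wrap (x + 2*pi) = angle_wrap x"
proof -
  have "(x + 2*pi + pi) / (2*pi) = (x + pi)/(2*pi) + 1" by (simp add: field_simps)
  then show ?thesis unfolding angle_wrap_def by (simp add: algebra_simps)
qed

lemma wrap_in: "angle_wrap x \<in> {-pi..<pi}"
proof -
  let ?q = "(x + pi) / (2*pi)"
  have "of_int \<lfloor>?q\<rfloor> \<le> ?q" "?q < of_int \<lfloor>?q\<rfloor> + 1" by linarith+
  have e: "2*pi*?q = x + pi" by simp
  have "2*pi * of_int \<lfloor>?q\<rfloor> \<le> 2*pi*?q" by (rule mult_left_mono) (use \<open>of_int \<lfloor>?q\<rfloor> \<le> ?q\<close> in auto)
  moreover have "2*pi*?q < 2*pi * (of_int \<lfloor>?q\<rfloor> + 1)" by (rule mult_strict_left_mono) (use \<open>?q < of_int \<lfloor>?q\<rfloor> + 1\<close> in auto)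
  ultimately have "2*pi * of_int \<lfloor>?q\<rfloor> \<le> x + pi" "x + pi < 2*pi * of_int \<lfloor>?q\<rfloor> + 2*pi"
    unfolding e by (simp_all add: algebra_simps)
  thus ?thesis unfolding angle_wrap_def by auto
qed

lemma wrap_eq:
  assumes "-pi \<le> x - 2*pi * of_int k" "x - 2*pi * of_int k < pi"
  shows "angle_wrap x = x - 2*pi * of_int k"
proof -
  have "\<lfloor>(x + pi) / (2*pi)\<rfloor> = k"
  proof (rule floor_unique)
    show "of_int k \<le> (x + pi) / (2*pi)" using assms pi_gt_zero by (simp add: field_simps)
    show "(x + pi) / (2*pi) < of_int k + 1" using assms pi_gt_zero by (simp add: field_simps)
  qed
  thus ?thesis unfolding angle_wrap_def by simp
qed

lemma wrap_shift_aux: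
  fixes H :: "real \<Rightarrow> real" and a :: real
  assumes H: "set_integrable lborel {-pi..<pi} H" and a: "0 \<le> a" "a \<le> 2*pi"
  shows "set_integrable lborel {-pi..<pi} (\<lambda>y. H (angle_wrap (y - a)))
     \<and> (LINT y:{-pi..<pi}|lborel. H (angle_wrap (y - a))) = (LINT u:{-pi..<pi}|lborel. H u)"
proof -
  have H1: "set_integrable lborel {pi-a..<pi} H"
    by (rule set_integrable_subset[OF H]) (use a in auto)
  have H2: "set_integrable lborel {-pi..<pi-a} H"
    by (rule set_integrable_subset[OF H]) (use a in auto)
  note s1 = shift_set_integral[OF H1, of "2*pi - a"]
  note s2 = shift_set_integral[OF H2, of "- a"]
  have e1: "{pi - a - (2*pi - a)..<pi - (2*pi - a)} = {-pi..<a-pi}" by auto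
  have e2: "{-pi - - a..<pi - a - - a} = {a-pi..<pi}" by auto
  have c1: "\<And>y. y \<in> {-pi..<a-pi} \<Longrightarrow> H (angle_wrap (y - a)) = H (y + (2*pi - a))"
  proof -
    fix y assume "y \<in> {-pi..<a-pi}"
    hence "angle_wrap (y - a) = y - a - 2*pi * of_int (-1::int)"
      by (intro wrap_eq) (use a in auto)
    hence "angle_wrap (y - a) = y + (2*pi - a)" by simp
    thus "H (angle_wrap (y - a)) = H (y + (2*pi - a))" by simp
  qed
  have c2: "\<And>y. y \<in> {a-pi..<pi} \<Longrightarrow> H (angle_wrap (y - a)) = H (y + - a)"
  proof -
    fix y assume "y \<in> {a-pi..<pi}"
    hence "angle_wrap (y - a) = y - a - 2*pi * of_int (0::int)"
      by (intro wrap_eq) (use a in auto)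
    hence "angle_wrap (y - a) = y + - a" by simp
    thus "H (angle_wrap (y - a)) = H (y + - a)" by simp
  qed
  have i1: "set_integrable lborel {-pi..<a-pi} (\<lambda>y. H (angle_wrap (y - a)))"
    using s1(1) unfolding e1 by (rule set_integrable_cong[THEN iffD1, rotated -1]) (auto simp: c1)
  have i2: "set_integrable lborel {a-pi..<pi} (\<lambda>y. H (angle_wrap (y - a)))"
    using s2(1) unfolding e2 by (rule set_integrable_cong[THEN iffD1, rotated -1]) (auto simp: c2)
  have U: "{-pi..<pi} = {-pi..<a-pi} \<union> {a-pi..<pi}" using a by auto
  have U2: "{-pi..<pi} = {pi-a..<pi} \<union> {-pi..<pi-a}" using a by auto
  have "set_integrable lborel {-pi..<pi} (\<lambda>y. H (angle_wrap (y - a)))"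
    unfolding U by (rule set_integrable_Un[OF i1 i2]) auto
  moreover have "(LINT y:{-pi..<pi}|lborel. H (angle_wrap (y - a)))
     = (LINT y:{-pi..<a-pi}|lborel. H (angle_wrap (y - a))) + (LINT y:{a-pi..<pi}|lborel. H (angle_wrap (y - a)))"
    unfolding U by (rule set_integral_Un[OF _ i1 i2]) auto
  moreover have "(LINT y:{-pi..<a-pi}|lborel. H (angle_wrap (y - a))) = (LINT u:{pi-a..<pi}|lborel. H u)"
    using s1(2) unfolding e1 by (subst set_lebesgue_integral_cong[where g="\<lambda>y. H (y + (2*pi - a))"]) (auto simp: c1)
  moreover have "(LINT y:{a-pi..<pi}|lborel. H (angle_wrap (y - a))) = (LINT u:{-pi..<pi-a}|lborel. H u)"
    using s2(2) unfolding e2 by (subst set_lebesgue_integral_cong[where g="\<lambda>y. H (y + - a)"]) (auto simp: c2)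
  moreover have "(LINT u:{-pi..<pi}|lborel. H u) = (LINT u:{pi-a..<pi}|lborel. H u) + (LINT u:{-pi..<pi-a}|lborel. H u)"
    unfolding U2 by (rule set_integral_Un[OF _ H1 H2]) auto
  ultimately show ?thesis by simp
qed

lemma wrap_shift:
  fixes H :: "real \<Rightarrow> real" and a :: real
  assumes H: "set_integrable lborel {-pi..<pi} H" and a: "a \<in> {-pi..<pi}"
  shows "set_integrable lborel {-pi..<pi} (\<lambda>y. H (angle_wrap (y - a)))
     \<and> (LINT y:{-pi..<pi}|lborel. H (angle_wrap (y - a))) = (LINT u:{-pi..<pi}|lborel. H u)"
proof (cases "0 \<le> a")
  case True
  then show ?thesis using wrap_shift_aux[OF H, of a] a by auto
next
  case False
  have "\<And>y. angle_wrap (y - a) = angle_wrap (y - (a + 2*pi))"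
    using wrap_periodic[of "y - (a + 2*pi)" for y] by (simp add: algebra_simps)
  then show ?thesis using wrap_shift_aux[OF H, of "a + 2*pi"] a False by auto
qed

lemma wrap_diff: "\<exists>k::int. angle_wrap x = x - 2*pi * of_int k"
  unfolding angle_wrap_def by blast

lemma cos_wrap: "cos (angle_wrap (y - a) + a) = cos y"
proof -
  obtain k :: int where "angle_wrap (y - a) = y - a - 2*pi * of_int k" using wrap_diff by blast
  hence "angle_wrap (y - a) + a = y - 2*pi * of_int k" by simp
  thus ?thesis by (simp add: cos_diff)
qed

lemma set_integrable_bounded_mult:
  fixes f g :: "real \<Rightarrow> real"
  assumes f: "set_integrable lborel A f" and g: "g \<in> borel_measurable borel"
    and B: "\<And>x. \<bar>g x\<bar> \<le> B" and A: "A \<in> sets borel"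
  shows "set_integrable lborel A (\<lambda>x. g x * f x)"
proof -
  have fi: "integrable lborel (\<lambda>x. indicator A x *\<^sub>R f x)" using f by (simp add: set_integrable_def)
  have fm: "(\<lambda>x. indicator A x *\<^sub>R f x) \<in> borel_measurable borel"
    using borel_measurable_integrable[OF fi] by simp
  have "integrable lborel (\<lambda>x. B * (indicator A x *\<^sub>R f x))" using fi by simp
  moreover have "(\<lambda>x. indicator A x *\<^sub>R (g x * f x)) \<in> borel_measurable lborel"
  proof -
    have "(\<lambda>x. indicator A x *\<^sub>R (g x * f x)) = (\<lambda>x. g x * (indicator A x *\<^sub>R f x))" by auto
    thus ?thesis using fm g by simp
  qed
  moreover have "AE x in lborel. norm (indicator A x *\<^sub>R (g x * f x)) \<le> norm (B * (indicator A x *\<^sub>R f x))"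
  proof (rule AE_I2)
    fix x
    have "0 \<le> B" using B[of x] by linarith
    have "\<bar>g x * f x\<bar> \<le> B * \<bar>f x\<bar>" unfolding abs_mult by (rule mult_right_mono[OF B]) auto
    thus "norm (indicator A x *\<^sub>R (g x * f x)) \<le> norm (B * (indicator A x *\<^sub>R f x))"
      using \<open>0 \<le> B\<close> by (auto simp: indicator_def abs_mult)
  qed
  ultimately show ?thesis unfolding set_integrable_def by (rule Bochner_Integration.integrable_bound)
qed

lemma density_facts:
  assumes d: "circ_density f"
  shows "set_integrable lborel {-pi..<pi} (\<lambda>x. cos x * f x)"
    and "set_integrable lborel {-pi..<pi} (\<lambda>x. sin x * f x)"
    and "circ_var f = 2 - 2 * (LINT x:{-pi..<pi}|lborel. cos x * f x)"
proof -
  have f: "set_integrable lborel {-pi..<pi} f" and one: "(LINT x:{-pi..<pi}|lborel. f x) = 1"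
    using d unfolding circ_density_def by auto
  show c: "set_integrable lborel {-pi..<pi} (\<lambda>x. cos x * f x)"
    by (rule set_integrable_bounded_mult[OF f, where B=1]) auto
  show "set_integrable lborel {-pi..<pi} (\<lambda>x. sin x * f x)"
    by (rule set_integrable_bounded_mult[OF f, where B=1]) auto
  have "circ_var f = (LINT x:{-pi..<pi}|lborel. 2 * f x - 2 * (cos x * f x))"
    unfolding circ_var_def by (rule set_lebesgue_integral_cong) (auto simp: algebra_simps)
  also have "\<dots> = (LINT x:{-pi..<pi}|lborel. 2 * f x) - (LINT x:{-pi..<pi}|lborel. 2 * (cos x * f x))"
    by (rule set_integral_diff(2)) (use f c in \<open>auto intro: set_integrable_mult_right\<close>)
  also have "\<dots> = 2 - 2 * (LINT x:{-pi..<pi}|lborel. cos x * f x)" using one by simp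
  finally show "circ_var f = 2 - 2 * (LINT x:{-pi..<pi}|lborel. cos x * f x)" .
qed

lemma inner:
  assumes d: "circ_density f" and c: "circ_centered f" and a: "a \<in> {-pi..<pi}"
  shows "set_integrable lborel {-pi..<pi} (\<lambda>y. (2 - 2 * cos y) * f (angle_wrap (y - a)))
     \<and> (LINT y:{-pi..<pi}|lborel. (2 - 2 * cos y) * f (angle_wrap (y - a)))
        = 2 - 2 * cos a * (LINT x:{-pi..<pi}|lborel. cos x * f x)"
proof -
  have f: "set_integrable lborel {-pi..<pi} f" and one: "(LINT x:{-pi..<pi}|lborel. f x) = 1"
    using d unfolding circ_density_def by auto
  have s0: "(LINT x:{-pi..<pi}|lborel. sin x * f x) = 0" using c unfolding circ_centered_def .
  note ic = density_facts(1)[OF d] and isn = density_facts(2)[OF d]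
  define H where "H u = (2 - 2 * cos (u + a)) * f u" for u
  have bnd: "\<And>u. \<bar>2 - 2 * cos (u + a)\<bar> \<le> 4"
  proof -
    fix u have "-1 \<le> cos (u + a)" "cos (u + a) \<le> 1" by auto
    thus "\<bar>2 - 2 * cos (u + a)\<bar> \<le> 4" by linarith
  qed
  have Hi: "set_integrable lborel {-pi..<pi} H"
    unfolding H_def by (rule set_integrable_bounded_mult[OF f _ bnd]) auto
  have Heq: "\<And>y. H (angle_wrap (y - a)) = (2 - 2 * cos y) * f (angle_wrap (y - a))"
    unfolding H_def using cos_wrap by simp
  note W = wrap_shift[OF Hi a]
  have i1: "set_integrable lborel {-pi..<pi} (\<lambda>u. 2 * f u - 2 * cos a * (cos u * f u))"
    using f ic by (intro set_integral_diff(1) set_integrable_mult_right) auto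
  have "(LINT u:{-pi..<pi}|lborel. H u)
     = (LINT u:{-pi..<pi}|lborel. (2 * f u - 2 * cos a * (cos u * f u)) + 2 * sin a * (sin u * f u))"
    unfolding H_def by (rule set_lebesgue_integral_cong) (auto simp: cos_add algebra_simps)
  also have "\<dots> = (LINT u:{-pi..<pi}|lborel. 2 * f u - 2 * cos a * (cos u * f u)) + (LINT u:{-pi..<pi}|lborel. 2 * sin a * (sin u * f u))"
    by (rule set_integral_add(2)[OF i1]) (use isn in auto)
  also have "\<dots> = 2 - 2 * cos a * (LINT x:{-pi..<pi}|lborel. cos x * f x)"
    using one s0 by (subst set_integral_diff(2)) (use f ic in auto)
  finally show ?thesis using W Heq by simp
qed

lemma angle_wrap_measurable[measurable]: "angle_wrap \<in> borel_measurable borel"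
  unfolding angle_wrap_def by measurable

theorem theorem3p7:
  fixes f1 f2 :: "real \<Rightarrow> real"
  assumes "circ_density f1" and "circ_density f2"
    and "circ_centered f1" and "circ_centered f2"
  shows "circ_var (circ_conv f1 f2) = circ_var f1 + circ_var f2 - circ_var f1 * circ_var f2 / 2"
proof -
  define I where "I = {-pi..<pi::real}"
  define c1 where "c1 = (LINT x:I|lborel. cos x * f1 x)"
  define c2 where "c2 = (LINT x:I|lborel. cos x * f2 x)"
  have v1: "circ_var f1 = 2 - 2 * c1" using density_facts(3)[OF assms(1)] unfolding c1_def I_def .
  have v2: "circ_var f2 = 2 - 2 * c2" using density_facts(3)[OF assms(2)] unfolding c2_def I_def .
  have f1i: "set_integrable lborel I f1" and f1p: "\<And>x. x \<in> I \<Longrightarrow> 0 \<le> f1 x"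
    using assms(1) unfolding circ_density_def I_def by auto
  have f2i: "set_integrable lborel I f2" and f2p: "\<And>x. x \<in> I \<Longrightarrow> 0 \<le> f2 x"
    using assms(2) unfolding circ_density_def I_def by auto
  define g1 where "g1 x = indicator I x * f1 x" for x
  define g2 where "g2 x = indicator I x * f2 x" for x
  have g1m[measurable]: "g1 \<in> borel_measurable borel"
    using borel_measurable_integrable[OF f1i[unfolded set_integrable_def]] unfolding g1_def by simp
  have g2m[measurable]: "g2 \<in> borel_measurable borel"
    using borel_measurable_integrable[OF f2i[unfolded set_integrable_def]] unfolding g2_def by simp
  have Im[measurable]: "I \<in> sets borel" unfolding I_def by simp
  have g2w: "\<And>z. f2 (angle_wrap z) = g2 (angle_wrap z)"
    using wrap_in unfolding g2_def I_def by auto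
  define F where "F = (\<lambda>(x, y). g1 x * (indicator I y * ((2 - 2 * cos y) * g2 (angle_wrap (y - x)))))"
  have Fm: "F \<in> borel_measurable (lborel \<Otimes>\<^sub>M lborel)"
    unfolding F_def by measurable
  have Fnn: "\<And>p. 0 \<le> F p"
  proof -
    fix p :: "real \<times> real"
    obtain x y where p: "p = (x, y)" by fastforce
    have "0 \<le> g1 x" unfolding g1_def using f1p by (auto simp: indicator_def)
    moreover have "0 \<le> g2 (angle_wrap (y - x))" unfolding g2_def using f2p wrap_in by (auto simp: indicator_def)
    moreover have "0 \<le> 2 - 2 * cos y" using cos_le_one[of y] by linarith
    ultimately show "0 \<le> F p" unfolding p F_def by (auto simp: indicator_def)
  qed
  note inn = inner[OF assms(2) assms(4), folded I_def c2_def]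
  have inner_eq: "\<And>x. (\<integral>y. F (x, y) \<partial>lborel) = indicator I x *\<^sub>R (f1 x * (2 - 2 * c2 * cos x))"
  proof -
    fix x
    show "(\<integral>y. F (x, y) \<partial>lborel) = indicator I x *\<^sub>R (f1 x * (2 - 2 * c2 * cos x))"
    proof (cases "x \<in> I")
      case True
      have "(\<integral>y. F (x, y) \<partial>lborel) = (\<integral>y. f1 x * (indicator I y *\<^sub>R ((2 - 2 * cos y) * f2 (angle_wrap (y - x)))) \<partial>lborel)"
        unfolding F_def g1_def using True g2w by simp
      also have "\<dots> = f1 x * (LINT y:I|lborel. (2 - 2 * cos y) * f2 (angle_wrap (y - x)))"
        unfolding set_lebesgue_integral_def by simp
      also have "\<dots> = f1 x * (2 - 2 * c2 * cos x)" using inn[OF True] by (simp add: c2_def)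
      finally show ?thesis using True by simp
    next
      case False
      then show ?thesis unfolding F_def g1_def by simp
    qed
  qed
  have c1i: "set_integrable lborel I (\<lambda>x. cos x * f1 x)"
    using density_facts(1)[OF assms(1)] unfolding I_def .
  have s1i': "set_integrable lborel I (\<lambda>x. 2 * f1 x - 2 * c2 * (cos x * f1 x))"
    using f1i c1i by (intro set_integral_diff(1) set_integrable_mult_right) auto
  have s1i: "set_integrable lborel I (\<lambda>x. f1 x * (2 - 2 * c2 * cos x))"
    by (rule set_integrable_cong[THEN iffD1, OF refl refl _ s1i']) (auto simp: algebra_simps)
  have Fint: "integrable (lborel \<Otimes>\<^sub>M lborel) F"
  proof (rule lborel_pair.Fubini_integrable[OF Fm])
    have "(\<lambda>x. \<integral>y. norm (F (x, y)) \<partial>lborel) = (\<lambda>x. indicator I x *\<^sub>R (f1 x * (2 - 2 * c2 * cos x)))"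
      using inner_eq Fnn by simp
    moreover note s1i
    ultimately show "integrable lborel (\<lambda>x. \<integral>y. norm (F (x, y)) \<partial>lborel)"
      unfolding set_integrable_def by simp
    show "AE x in lborel. integrable lborel (\<lambda>y. F (x, y))"
    proof (rule AE_I2)
      fix x
      show "integrable lborel (\<lambda>y. F (x, y))"
      proof (cases "x \<in> I")
        case True
        have "(\<lambda>y. F (x, y)) = (\<lambda>y. f1 x * (indicator I y *\<^sub>R ((2 - 2 * cos y) * f2 (angle_wrap (y - x)))))"
          unfolding F_def g1_def using True g2w by simp
        then show ?thesis using inn[OF True] unfolding set_integrable_def by simp
      next
        case False
        then show ?thesis unfolding F_def g1_def by simp
      qed
    qed
  qed
  have pw: "indicator I y *\<^sub>R ((2 - 2 * cos y) * circ_conv f1 f2 y) = (\<integral>x. F (x, y) \<partial>lborel)" for y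
  proof -
    have "(\<integral>x. F (x, y) \<partial>lborel) = (\<integral>x. (indicator I y * (2 - 2 * cos y)) * (indicator I x *\<^sub>R (f1 x * f2 (angle_wrap (y - x)))) \<partial>lborel)"
      unfolding F_def g1_def using g2w by (intro Bochner_Integration.integral_cong) (auto simp: algebra_simps)
    also have "\<dots> = (indicator I y * (2 - 2 * cos y)) * (\<integral>x. indicator I x *\<^sub>R (f1 x * f2 (angle_wrap (y - x))) \<partial>lborel)"
      by (rule integral_mult_right_zero)
    finally show ?thesis unfolding circ_conv_def set_lebesgue_integral_def I_def by simp
  qed
  have "circ_var (circ_conv f1 f2) = (\<integral>y. (\<integral>x. F (x, y) \<partial>lborel) \<partial>lborel)"
    unfolding circ_var_def set_lebesgue_integral_def pw[symmetric] I_def ..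
  also have "\<dots> = (\<integral>x. (\<integral>y. F (x, y) \<partial>lborel) \<partial>lborel)"
    using lborel_pair.Fubini_integral[of "\<lambda>x y. F (x, y)"] Fint by simp
  also have "\<dots> = (LINT x:I|lborel. f1 x * (2 - 2 * c2 * cos x))"
    unfolding inner_eq set_lebesgue_integral_def ..
  also have "\<dots> = (LINT x:I|lborel. 2 * f1 x - 2 * c2 * (cos x * f1 x))"
    by (rule set_lebesgue_integral_cong) (auto simp: algebra_simps)
  also have "\<dots> = 2 - 2 * c2 * c1"
    using assms(1) f1i c1i unfolding c1_def circ_density_def I_def
    by (subst set_integral_diff(2)) auto
  finally have "circ_var (circ_conv f1 f2) = 2 - 2 * c2 * c1" .
  then show ?thesis unfolding v1 v2 by (simp add: field_simps)
qed

end
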